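(* Assume $n\ge1$. Let $\bar x^k,\bar s^k\in\mathbb{R}^{n+1}_{++}$ satisfy $\|\bar x^k\odot\bar s^k-\bar\mu^k e\|\le\beta\bar\mu^k$, where $\bar\mu^k=(\bar x^k)^\top\bar s^k/(n+1)$ and $0<\beta<\sqrt2-1$. Let $\eta=\beta/\sqrt{n+1}$, $\gamma=1-\eta$, let $(d_{\bar x},d_{\bar s})$ solve the Newton system (N) at $(\bar x^k,\bar s^k)$ with these parameters, and set $\bar x^+=\bar x^k+d_{\bar x}$ (which is componentwise positive) and $\bar s^+=\psi(\bar x^+)+\gamma\bar r^k$, where $\bar r^k=\bar s^k-\psi(\bar x^k)$. Then, with $\bar\mu^+=(\bar x^+)^\top\bar s^+/(n+1)$, $$\|\bar x^+\odot\bar s^+-\bar\mu^+e\|\le\beta\bar\mu^+,$$ and $\bar s^+>0$ (componentwise).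
   Context: Let $Q\in\mathbb{R}^{n_z\times n_z}$ be symmetric positive semidefinite, $c\in\mathbb{R}^{n_z}$, $A\in\mathbb{R}^{n_b\times n_z}$, $b\in\mathbb{R}^{n_b}$, and $n=n_z+n_b$. Define $M=\begin{bmatrix}Q&-A^\top\\ A&0\end{bmatrix}$ and $q=\begin{bmatrix}c\\-b\end{bmatrix}$. For $\bar x=(x,\tau)\in\mathbb{R}^{n+1}_{++}$ define $\psi(\bar x)=\begin{bmatrix} Mx+q\tau\\ -x^\top Mx/\tau-x^\top q\end{bmatrix}$ and its Jacobian $\nabla\psi(\bar x)=\begin{bmatrix} M & q\\ -x^\top(M+M^\top)/\tau-q^\top & x^\top Mx/\tau^2\end{bmatrix}$. $\odot$ is the componentwise product, $e$ the all-ones vector, $\|\cdot\|$ the Euclidean norm. Newton system (N): given $\bar x^k,\bar s^k\in\mathbb{R}^{n+1}_{++}$ and $\eta,\gamma\in(0,1)$, let $\bar r^k=\bar s^k-\psi(\bar x^k)$ and $\bar\mu^k=(\bar x^k)^\top\bar s^k/(n+1)$; $(d_{\bar x},d_{\bar s})$ solves (N) if $d_{\bar s}-\nabla\psi(\bar x^k)d_{\bar x}=-\eta\bar r^k$ and $\bar x^k\odot d_{\bar s}+\bar s^k\odot d_{\bar x}=\gamma\bar\mu^k e-\bar x^k\odot\bar s^k$. *)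

theory Defs
  imports Complex_Main
begin

text \<open>Vectors in R^m are represented as functions nat => real, only indices < m matter;
  matrices as nat => nat => real. Vectors in R^(n+1) use indices 0..n, the last index n
  being the homogenising coordinate tau.\<close>

definition dotp :: "nat \<Rightarrow> (nat \<Rightarrow> real) \<Rightarrow> (nat \<Rightarrow> real) \<Rightarrow> real" where
  "dotp m x y = (\<Sum>i<m. x i * y i)"

definition matvec :: "nat \<Rightarrow> (nat \<Rightarrow> nat \<Rightarrow> real) \<Rightarrow> (nat \<Rightarrow> real) \<Rightarrow> (nat \<Rightarrow> real)" where
  "matvec m B x = (\<lambda>i. \<Sum>j<m. B i j * x j)"

text \<open>M = [[Q, -A^T],[A, 0]] of size n x n with n = nz + nb.\<close>
definition Mmat :: "nat \<Rightarrow> (nat \<Rightarrow> nat \<Rightarrow> real) \<Rightarrow> (nat \<Rightarrow> nat \<Rightarrow> real) \<Rightarrow> (nat \<Rightarrow> nat \<Rightarrow> real)" where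
  "Mmat nz Q A = (\<lambda>i j.
     if i < nz \<and> j < nz then Q i j
     else if i < nz then - A (j - nz) i
     else if j < nz then A (i - nz) j
     else 0)"

definition qvec :: "nat \<Rightarrow> (nat \<Rightarrow> real) \<Rightarrow> (nat \<Rightarrow> real) \<Rightarrow> (nat \<Rightarrow> real)" where
  "qvec nz c b = (\<lambda>i. if i < nz then c i else - b (i - nz))"

definition psi :: "nat \<Rightarrow> (nat \<Rightarrow> nat \<Rightarrow> real) \<Rightarrow> (nat \<Rightarrow> real) \<Rightarrow> (nat \<Rightarrow> real) \<Rightarrow> (nat \<Rightarrow> real)" where
  "psi n M q xb = (\<lambda>i.
     if i < n then matvec n M xb i + q i * xb n
     else - dotp n xb (matvec n M xb) / xb n - dotp n xb q)"

definition jac :: "nat \<Rightarrow> (nat \<Rightarrow> nat \<Rightarrow> real) \<Rightarrow> (nat \<Rightarrow> real) \<Rightarrow> (nat \<Rightarrow> real) \<Rightarrow> (nat \<Rightarrow> nat \<Rightarrow> real)" where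
  "jac n M q xb = (\<lambda>i j.
     if i < n \<and> j < n then M i j
     else if i < n then q i
     else if j < n then - (\<Sum>l<n. xb l * (M l j + M j l)) / xb n - q j
     else dotp n xb (matvec n M xb) / (xb n)^2)"

definition mubar :: "nat \<Rightarrow> (nat \<Rightarrow> real) \<Rightarrow> (nat \<Rightarrow> real) \<Rightarrow> real" where
  "mubar n x s = dotp (n+1) x s / real (n+1)"

definition centdev :: "nat \<Rightarrow> (nat \<Rightarrow> real) \<Rightarrow> (nat \<Rightarrow> real) \<Rightarrow> real" where
  "centdev n x s = sqrt (\<Sum>i<n+1. (x i * s i - mubar n x s)^2)"

definition newton_sys :: "nat \<Rightarrow> (nat \<Rightarrow> nat \<Rightarrow> real) \<Rightarrow> (nat \<Rightarrow> real) \<Rightarrow> real \<Rightarrow> real \<Rightarrow>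
    (nat \<Rightarrow> real) \<Rightarrow> (nat \<Rightarrow> real) \<Rightarrow> (nat \<Rightarrow> real) \<Rightarrow> (nat \<Rightarrow> real) \<Rightarrow> bool" where
  "newton_sys n M q eta gam x s dx ds \<longleftrightarrow>
     (\<forall>i<n+1. ds i - matvec (n+1) (jac n M q x) dx i = - eta * (s i - psi n M q x i)) \<and>
     (\<forall>i<n+1. x i * ds i + s i * dx i = gam * mubar n x s - x i * s i)"

end

theory Submission
  imports Defs
begin


lemma sumsq_le_sqsum:
  fixes y :: "nat \<Rightarrow> real"
  assumes "finite I" "\<And>i. i \<in> I \<Longrightarrow> 0 \<le> y i"
  shows "(\<Sum>i\<in>I. (y i)^2) \<le> (\<Sum>i\<in>I. y i)^2"
proof -
  have "(\<Sum>i\<in>I. (y i)^2) \<le> (\<Sum>i\<in>I. y i * (\<Sum>j\<in>I. y j))"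
  proof (rule sum_mono)
    fix i assume i: "i \<in> I"
    have "y i \<le> (\<Sum>j\<in>I. y j)" using member_le_sum[of i I y] assms i by auto
    then show "(y i)^2 \<le> y i * (\<Sum>j\<in>I. y j)" using assms(2)[OF i] by (simp add: power2_eq_square mult_left_mono)
  qed
  also have "\<dots> = (\<Sum>i\<in>I. y i)^2" by (simp add: sum_distrib_right[symmetric] power2_eq_square)
  finally show ?thesis .
qed

lemma r32: "sqrt (2::real) < 3/2"
proof -
  have "sqrt (2::real) < sqrt ((3/2)^2)" by (subst real_sqrt_less_iff) (simp add: power2_eq_square)
  then show ?thesis by simp
qed

lemma abstract_step:
  fixes N k :: nat and x s u v :: "nat \<Rightarrow> real" and \<beta> \<eta> \<mu> w :: real
  assumes N2: "2 \<le> N"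
    and xpos: "\<forall>i<N. 0 < x i" and spos: "\<forall>i<N. 0 < s i"
    and mu: "\<mu> = (\<Sum>i<N. x i * s i) / real N"
    and cent: "(\<Sum>i<N. (x i * s i - \<mu>)^2) \<le> (\<beta> * \<mu>)^2"
    and bpos: "0 < \<beta>" and blt: "\<beta> < sqrt 2 - 1"
    and eta: "\<eta> = \<beta> / sqrt (real N)"
    and lin: "\<forall>i<N. x i * v i + s i * u i = (1 - \<eta>) * \<mu> - x i * s i"
    and wdef: "(\<Sum>i<N. u i * v i) = w" and w0: "0 \<le> w" and k: "k < N"
  shows "(\<forall>i<N. 0 < x i + u i) \<and>
         (\<Sum>i<N. (u i * v i - (if i = k then w else 0))^2) \<le> (\<beta> * (1 - \<eta>) * \<mu>)^2"
proof -
  define r where "r = sqrt (2::real)"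
  have r2: "r * r = 2" unfolding r_def by simp
  have rpos: "r > 0" unfolding r_def by simp
  have r3: "r < 3/2" unfolding r_def using r32 .
  have blt': "\<beta> < r - 1" using blt r_def by simp
  have b1: "\<beta> < 1" using blt r3 r_def by simp
  define m where "m i = x i * s i" for i
  have mpos: "\<forall>i<N. 0 < m i" using xpos spos m_def by simp
  have Npos: "real N > 0" using N2 by simp
  have summ: "(\<Sum>i<N. m i) = real N * \<mu>" using mu Npos m_def by simp
  have mupos: "\<mu> > 0"
  proof -
    have "(\<Sum>i<N. m i) > 0" using mpos N2 by (intro sum_pos) (auto simp: lessThan_empty_iff)
    then show ?thesis using summ Npos by (simp add: zero_less_mult_iff)
  qed
  have cent': "(\<Sum>i<N. (m i - \<mu>)^2) \<le> (\<beta> * \<mu>)^2" using cent m_def by simp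
  have mlow: "\<forall>i<N. (1 - \<beta>) * \<mu> \<le> m i"
  proof (intro allI impI)
    fix i assume i: "i < N"
    have "(m i - \<mu>)^2 \<le> (\<Sum>i<N. (m i - \<mu>)^2)"
      using member_le_sum[of i "{..<N}" "\<lambda>i. (m i - \<mu>)^2"] i by auto
    then have "(m i - \<mu>)^2 \<le> (\<beta> * \<mu>)^2" using cent' by linarith
    then have "\<bar>m i - \<mu>\<bar> \<le> \<bar>\<beta> * \<mu>\<bar>" using abs_le_square_iff by blast
    moreover have "\<bar>\<beta> * \<mu>\<bar> = \<beta> * \<mu>" using bpos mupos by simp
    ultimately have "\<mu> - m i \<le> \<beta> * \<mu>" by (simp add: abs_le_iff)
    then show "(1 - \<beta>) * \<mu> \<le> m i" by (simp add: algebra_simps)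
  qed
  have omb: "(1 - \<beta>) * \<mu> > 0" using b1 mupos by simp
  define h where "h i = (1 - \<eta>) * \<mu> - m i" for i
  have sum0: "(\<Sum>i<N. \<mu> - m i) = 0" using summ by (simp add: sum_subtractf)
  have eta2: "real N * \<eta>^2 = \<beta>^2" using Npos by (simp add: eta power_divide)
  have z0: "(\<Sum>i<N. 2*\<eta>*\<mu>*(\<mu> - m i)) = 0" using sum0 by (simp add: sum_distrib_left[symmetric])
  have sumh: "(\<Sum>i<N. (h i)^2) = (\<Sum>i<N. (m i - \<mu>)^2) - (\<Sum>i<N. 2*\<eta>*\<mu>*(\<mu> - m i)) + real N * \<eta>^2*\<mu>^2"
  proof -
    have "(\<Sum>i<N. (h i)^2) = (\<Sum>i<N. (m i - \<mu>)^2 - 2*\<eta>*\<mu>*(\<mu> - m i) + \<eta>^2*\<mu>^2)"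
      by (rule sum.cong) (auto simp: h_def power2_eq_square algebra_simps)
    also have "\<dots> = (\<Sum>i<N. (m i - \<mu>)^2) - (\<Sum>i<N. 2*\<eta>*\<mu>*(\<mu> - m i)) + real N * \<eta>^2*\<mu>^2"
      by (simp add: sum.distrib sum_subtractf)
    finally show ?thesis .
  qed
  have sumh2: "(\<Sum>i<N. (h i)^2) \<le> 2 * (\<beta>*\<mu>)^2"
    using sumh z0 eta2 cent' by (simp add: power_mult_distrib)
  define G2 where "G2 = 2 * \<beta>^2 * \<mu> / (1 - \<beta>)"
  have sumhm: "(\<Sum>i<N. (h i)^2 / m i) \<le> G2"
  proof -
    have "(\<Sum>i<N. (h i)^2 / m i) \<le> (\<Sum>i<N. (h i)^2 / ((1 - \<beta>) * \<mu>))"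
      using mlow mpos omb by (intro sum_mono divide_left_mono) auto
    also have "\<dots> = (\<Sum>i<N. (h i)^2) / ((1 - \<beta>) * \<mu>)" by (simp add: sum_divide_distrib)
    also have "\<dots> \<le> 2 * (\<beta>*\<mu>)^2 / ((1 - \<beta>) * \<mu>)" using sumh2 omb by (intro divide_right_mono) auto
    also have "\<dots> = G2" unfolding G2_def using mupos b1 by (simp add: power2_eq_square field_simps)
    finally show ?thesis .
  qed
  define P where "P i = u i * s i" for i
  define R where "R i = v i * x i" for i
  have PR: "\<forall>i<N. P i + R i = h i"
  proof (intro allI impI)
    fix i assume "i < N"
    then have "x i * v i + s i * u i = (1 - \<eta>) * \<mu> - x i * s i" using lin by blast
    then show "P i + R i = h i" unfolding P_def R_def h_def m_def by (simp add: algebra_simps)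
  qed
  have uv: "\<forall>i<N. u i * v i = P i * R i / m i" using mpos P_def R_def m_def by (auto simp: field_simps)
  have termeq: "\<forall>i<N. (P i ^2 + R i^2) / m i = (h i)^2 / m i - 2 * (u i * v i)"
  proof (intro allI impI)
    fix i assume i: "i < N"
    have "h i = P i + R i" using PR i by simp
    then have "(h i)^2 = P i ^2 + R i^2 + 2 * (P i * R i)" by (simp add: power2_eq_square algebra_simps)
    then show "(P i ^2 + R i^2) / m i = (h i)^2 / m i - 2 * (u i * v i)" using uv i mpos by (auto simp: field_simps)
  qed
  have sumPR: "(\<Sum>i<N. (P i ^2 + R i^2) / m i) \<le> G2"
  proof -
    have "(\<Sum>i<N. (P i ^2 + R i^2) / m i) = (\<Sum>i<N. (h i)^2 / m i - 2 * (u i * v i))"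
      using termeq by (intro sum.cong) auto
    also have "\<dots> = (\<Sum>i<N. (h i)^2 / m i) - 2 * w" using wdef by (simp add: sum_subtractf sum_distrib_left[symmetric])
    finally show ?thesis using sumhm w0 by linarith
  qed
  have sqb: "2 * \<beta>^2 < (1 - \<beta>)^2"
  proof -
    have "\<beta> * (r + 1) < (r - 1) * (r + 1)" using blt' rpos by (intro mult_strict_right_mono) auto
    then have "\<beta> * (r + 1) < 1" using r2 by (simp add: algebra_simps)
    moreover have "0 \<le> r*\<beta>" using bpos rpos by simp
    ultimately have "0 < (1 - \<beta> - r*\<beta>) * (1 - \<beta> + r*\<beta>)" using b1
      by (intro mult_pos_pos) (auto simp: algebra_simps)
    then show ?thesis using r2 by (simp add: power2_eq_square algebra_simps)
  qed
  have xup: "\<forall>i<N. 0 < x i + u i"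
  proof (intro allI impI)
    fix i assume i: "i < N"
    have "P i ^2 / m i \<le> (P i ^2 + R i^2) / m i" using mpos i by (intro divide_right_mono) auto
    also have "\<dots> \<le> (\<Sum>i<N. (P i ^2 + R i^2) / m i)"
      using i mpos by (intro member_le_sum) (auto intro!: divide_nonneg_pos)
    finally have "P i ^2 / m i \<le> G2" using sumPR by linarith
    then have "P i ^2 \<le> G2 * m i" using mpos i by (simp add: divide_le_eq)
    then have "(u i)^2 * s i * s i \<le> G2 * x i * s i" unfolding P_def m_def by (simp add: power2_eq_square algebra_simps)
    then have A: "(u i)^2 * s i \<le> G2 * x i" using spos i by (simp add: mult_le_cancel_right)
    have "(u i)^2 * ((1 - \<beta>) * \<mu>) \<le> (u i)^2 * m i" using mlow i by (intro mult_left_mono) auto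
    also have "\<dots> = ((u i)^2 * s i) * x i" unfolding m_def by (simp add: algebra_simps)
    also have "\<dots> \<le> G2 * x i * x i" using A xpos i by (intro mult_right_mono) auto
    finally have B: "(u i)^2 * ((1 - \<beta>) * \<mu>) \<le> G2 * x i * x i" .
    have "(u i)^2 * (1 - \<beta>)^2 \<le> 2 * \<beta>^2 * (x i)^2"
    proof -
      have "(u i)^2 * (1 - \<beta>)^2 * \<mu> = (u i)^2 * ((1 - \<beta>) * \<mu>) * (1 - \<beta>)" by (simp add: power2_eq_square)
      also have "\<dots> \<le> G2 * x i * x i * (1 - \<beta>)" using B b1 by (intro mult_right_mono) auto
      also have "\<dots> = 2 * \<beta>^2 * (x i)^2 * \<mu>" unfolding G2_def using b1 by (simp add: power2_eq_square field_simps)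
      finally show ?thesis using mupos by simp
    qed
    also have "\<dots> < (1 - \<beta>)^2 * (x i)^2" using sqb xpos i by (intro mult_strict_right_mono) auto
    finally have "(u i)^2 < (x i)^2" using b1 by (simp add: mult.commute)
    then have "sqrt ((u i)^2) < sqrt ((x i)^2)" by (rule real_sqrt_less_mono)
    then have "\<bar>u i\<bar> < \<bar>x i\<bar>" by simp
    then show "0 < x i + u i" using xpos i by auto
  qed
  define c where "c i = (h i)^2 / (4 * m i)" for i
  have ac: "\<forall>i<N. u i * v i \<le> c i"
  proof (intro allI impI)
    fix i assume i: "i < N"
    have "h i = P i + R i" using PR i by simp
    then have "4 * (P i * R i) \<le> (h i)^2" proof -
      have "0 \<le> (P i - R i)^2" by simp
      then show ?thesis using \<open>h i = P i + R i\<close> by (simp add: power2_eq_square algebra_simps)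
    qed
    then have "P i * R i / m i \<le> (h i)^2 / (4 * m i)" using mpos i by (simp add: field_simps)
    then show "u i * v i \<le> c i" using uv i c_def by simp
  qed
  have c0: "\<forall>i<N. 0 \<le> c i" using mpos unfolding c_def by (auto intro!: divide_nonneg_pos)
  have sumc: "(\<Sum>i<N. c i) \<le> G2 / 4"
  proof -
    have "(\<Sum>i<N. c i) = (\<Sum>i<N. (h i)^2 / m i) / 4" unfolding c_def by (simp add: sum_divide_distrib field_simps)
    then show ?thesis using sumhm by simp
  qed
  define bb where "bb i = u i * v i - (if i = k then w else 0)" for i
  define bp where "bp i = max (bb i) 0" for i
  define bn where "bn i = max (- bb i) 0" for i
  have sumbb: "(\<Sum>i<N. bb i) = 0" unfolding bb_def using wdef k by (simp add: sum_subtractf)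
  have bsplit: "\<And>i. bb i = bp i - bn i" unfolding bp_def bn_def by auto
  have bsq: "\<And>i. (bb i)^2 = (bp i)^2 + (bn i)^2" unfolding bp_def bn_def by (auto simp: max_def power2_eq_square)
  have bpc: "\<forall>i<N. bp i \<le> c i" using ac c0 w0 unfolding bp_def bb_def by auto
  have sumbp: "(\<Sum>i<N. bp i) \<le> G2 / 4"
    using sum_mono[of "{..<N}" bp c] bpc sumc by auto
  have sumbn: "(\<Sum>i<N. bn i) = (\<Sum>i<N. bp i)"
    using sumbb bsplit by (simp add: sum_subtractf)
  have bp0: "0 \<le> (\<Sum>i<N. bp i)" unfolding bp_def by (intro sum_nonneg) auto
  have sumb2: "(\<Sum>i<N. (bb i)^2) \<le> 2 * (G2/4)^2"
  proof -
    have "(\<Sum>i<N. (bb i)^2) = (\<Sum>i<N. (bp i)^2) + (\<Sum>i<N. (bn i)^2)" by (simp add: bsq sum.distrib)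
    also have "\<dots> \<le> (\<Sum>i<N. bp i)^2 + (\<Sum>i<N. bn i)^2"
      by (intro add_mono sumsq_le_sqsum) (auto simp: bp_def bn_def)
    also have "\<dots> = 2 * (\<Sum>i<N. bp i)^2" using sumbn by simp
    also have "\<dots> \<le> 2 * (G2/4)^2" using sumbp bp0 by (simp add: power_mono)
    finally show ?thesis .
  qed
  have etale: "\<eta> \<le> \<beta> / r"
  proof -
    have "r \<le> sqrt (real N)" unfolding r_def using N2 by simp
    moreover have "0 < sqrt (real N)" using N2 by simp
    ultimately show ?thesis unfolding eta using bpos rpos by (intro divide_left_mono) auto
  qed
  have keyq: "\<beta> \<le> (1 - \<beta>) * (r - \<beta>)"
  proof -
    have "0 < (r - 1 - \<beta>) * (3 - \<beta>)" using blt' b1 by (intro mult_pos_pos) auto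
    moreover have "(1 - \<beta>) * (r - \<beta>) - \<beta> = 3 - 2*r + (r - 1 - \<beta>) * (3 - \<beta>)" by (simp add: algebra_simps)
    ultimately show ?thesis using r3 by linarith
  qed
  have key: "\<beta> / (r * (1 - \<beta>)) \<le> 1 - \<eta>"
  proof -
    have "\<beta> / (r * (1 - \<beta>)) \<le> (1 - \<beta>) * (r - \<beta>) / (r * (1 - \<beta>))"
      using keyq rpos b1 by (intro divide_right_mono) auto
    also have "\<dots> = 1 - \<beta> / r" using rpos b1 by (simp add: field_simps)
    finally show ?thesis using etale by linarith
  qed
  have key2: "(\<beta> / (r * (1 - \<beta>)))^2 \<le> (1 - \<eta>)^2"
    using key bpos rpos b1 by (intro power_mono) auto
  have rr: "r^2 = 2" using r2 by (simp add: power2_eq_square)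
  have e1: "(\<beta> / (r * (1 - \<beta>)))^2 = \<beta>^2 / (2 * (1 - \<beta>)^2)"
    by (simp add: power_divide power_mult_distrib rr)
  have e2: "G2 / 4 = \<beta>^2 * \<mu> / (2 * (1 - \<beta>))" unfolding G2_def using b1 by (simp add: field_simps)
  have "2 * (G2/4)^2 = (\<beta> * \<mu>)^2 * (\<beta> / (r * (1 - \<beta>)))^2"
  proof -
    have gen: "\<And>d::real. d > 0 \<Longrightarrow> 2 * (\<beta>^2 * \<mu> / (2 * d))^2 = (\<beta> * \<mu>)^2 * (\<beta>^2 / (2 * d^2))"
      by (simp add: field_simps power2_eq_square)
    show ?thesis unfolding e1 e2 using gen[of "1 - \<beta>"] b1 by simp
  qed
  also have "\<dots> \<le> (\<beta> * \<mu>)^2 * (1 - \<eta>)^2" using key2 by (intro mult_left_mono) auto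
  also have "\<dots> = (\<beta> * (1 - \<eta>) * \<mu>)^2" by (simp add: power2_eq_square)
  finally have "(\<Sum>i<N. (bb i)^2) \<le> (\<beta> * (1 - \<eta>) * \<mu>)^2" using sumb2 by linarith
  then show ?thesis using xup bb_def by simp
qed


abbreviation KK :: "nat \<Rightarrow> (nat \<Rightarrow> nat \<Rightarrow> real) \<Rightarrow> (nat \<Rightarrow> real) \<Rightarrow> (nat \<Rightarrow> real) \<Rightarrow> real" where
  "KK n M u v \<equiv> dotp n u (matvec n M v)"

lemma L_dm: "dotp n u (matvec n M v) = (\<Sum>i<n. \<Sum>j<n. u i * M i j * v j)"
  by (simp add: dotp_def matvec_def sum_distrib_left mult.assoc)

lemma L_Kbil: "KK n M (\<lambda>i. u i - t * v i) (\<lambda>i. u i - t * v i)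
   = KK n M u u - t * KK n M u v - t * KK n M v u + t^2 * KK n M v v"
proof -
  have "KK n M (\<lambda>i. u i - t * v i) (\<lambda>i. u i - t * v i) =
     (\<Sum>i<n. \<Sum>j<n. u i * M i j * u j - t * (u i * M i j * v j) - t * (v i * M i j * u j) + t^2 * (v i * M i j * v j))"
    unfolding L_dm by (intro sum.cong refl) (simp add: algebra_simps power2_eq_square)
  also have "\<dots> = KK n M u u - t * KK n M u v - t * KK n M v u + t^2 * KK n M v v"
    unfolding L_dm by (simp add: sum.distrib sum_subtractf sum_distrib_left)
  finally show ?thesis .
qed

lemma L_Kadd: "KK n M (\<lambda>i. u i + v i) (\<lambda>i. u i + v i)
   = KK n M u u + KK n M u v + KK n M v u + KK n M v v"
proof -
  have "KK n M (\<lambda>i. u i + v i) (\<lambda>i. u i + v i) =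
     (\<Sum>i<n. \<Sum>j<n. u i * M i j * u j + (u i * M i j * v j) + (v i * M i j * u j) + (v i * M i j * v j))"
    unfolding L_dm by (intro sum.cong refl) (simp add: algebra_simps)
  also have "\<dots> = KK n M u u + KK n M u v + KK n M v u + KK n M v v"
    unfolding L_dm by (simp add: sum.distrib)
  finally show ?thesis .
qed

lemma L_swap: "(\<Sum>j<n. (\<Sum>l<n. x l * (M l j + M j l)) * d j) = KK n M x d + KK n M d x"
proof -
  have "(\<Sum>j<n. (\<Sum>l<n. x l * (M l j + M j l)) * d j) = (\<Sum>j<n. \<Sum>l<n. x l * M l j * d j + d j * M j l * x l)"
    by (intro sum.cong refl) (simp add: sum_distrib_left sum_distrib_right algebra_simps)
  also have "\<dots> = (\<Sum>j<n. \<Sum>l<n. x l * M l j * d j) + (\<Sum>j<n. \<Sum>l<n. d j * M j l * x l)"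
    by (simp add: sum.distrib)
  also have "(\<Sum>j<n. \<Sum>l<n. x l * M l j * d j) = KK n M x d" unfolding L_dm by (rule sum.swap)
  also have "(\<Sum>j<n. \<Sum>l<n. d j * M j l * x l) = KK n M d x" unfolding L_dm by simp
  finally show ?thesis .
qed

lemma L_Jd_lt: "i < n \<Longrightarrow> matvec (n+1) (jac n M q x) dx i = matvec n M dx i + q i * dx n"
proof -
  assume i: "i < n"
  have "matvec (n+1) (jac n M q x) dx i = (\<Sum>j<n. jac n M q x i j * dx j) + jac n M q x i n * dx n"
    by (simp add: matvec_def)
  also have "(\<Sum>j<n. jac n M q x i j * dx j) = (\<Sum>j<n. M i j * dx j)"
    using i by (intro sum.cong refl) (simp add: jac_def)
  finally show ?thesis using i by (simp add: jac_def matvec_def)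
qed

lemma L_Jd_lt': "i < n \<Longrightarrow> matvec (Suc n) (jac n M q x) dx i = matvec n M dx i + q i * dx n"
  using L_Jd_lt[of i n M q x dx] by simp

lemma L_Jd_n: "matvec (n+1) (jac n M q x) dx n =
   - (KK n M x dx + KK n M dx x) / x n - dotp n q dx + KK n M x x / (x n)^2 * dx n"
proof -
  have "matvec (n+1) (jac n M q x) dx n = (\<Sum>j<n. jac n M q x n j * dx j) + jac n M q x n n * dx n"
    by (simp add: matvec_def)
  also have "(\<Sum>j<n. jac n M q x n j * dx j) = (\<Sum>j<n. (- (\<Sum>l<n. x l * (M l j + M j l)) / x n - q j) * dx j)"
    by (intro sum.cong refl) (simp add: jac_def)
  also have "\<dots> = (\<Sum>j<n. - ((\<Sum>l<n. x l * (M l j + M j l)) * dx j) / x n - q j * dx j)"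
    by (intro sum.cong refl) (simp add: left_diff_distrib)
  also have "\<dots> = - (\<Sum>j<n. (\<Sum>l<n. x l * (M l j + M j l)) * dx j) / x n - dotp n q dx"
    by (simp only: sum_subtractf sum_divide_distrib[symmetric] sum_negf dotp_def)
  finally show ?thesis by (simp add: L_swap jac_def)
qed

lemma L_psi_orth: "x n \<noteq> 0 \<Longrightarrow> dotp (n+1) x (psi n M q x) = 0"
proof -
  assume t: "x n \<noteq> 0"
  have "dotp (n+1) x (psi n M q x) = (\<Sum>i<n. x i * psi n M q x i) + x n * psi n M q x n"
    by (simp add: dotp_def)
  also have "(\<Sum>i<n. x i * psi n M q x i) = (\<Sum>i<n. x i * (matvec n M x i + q i * x n))"
    by (intro sum.cong refl) (simp add: psi_def)
  also have "\<dots> = KK n M x x + x n * dotp n x q"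
    by (simp add: dotp_def algebra_simps sum.distrib sum_distrib_left)
  finally show ?thesis using t by (simp add: psi_def field_simps)
qed


lemma sum_if_less: "(nz::nat) \<le> n \<Longrightarrow> (\<Sum>i<n. if i < nz then f i else (0::real)) = (\<Sum>i<nz. f i)"
proof -
  assume a: "nz \<le> n"
  have "sum f ({..<n} \<inter> {i. i < nz}) = (\<Sum>i<n. if i \<in> {i. i < nz} then f i else (0::real))"
    using sum.inter_restrict[of "{..<n}" f "{i. i<nz}"] by simp
  then have "(\<Sum>i<n. if i < nz then f i else (0::real)) = sum f ({..<n} \<inter> {i. i < nz})" by simp
  also have "{..<n} \<inter> {i. i < nz} = {..<nz}" using a by auto
  finally show ?thesis .
qed

lemma L_Kpsd:
  assumes Qs: "\<forall>i<nz. \<forall>j<nz. Q i j = Q j i"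
    and Qp: "\<forall>z. 0 \<le> (\<Sum>i<nz. \<Sum>j<nz. z i * Q i j * z j)"
  shows "0 \<le> KK (nz+nb) (Mmat nz Q A) y y"
proof -
  define n where "n = nz + nb"
  define M where "M = Mmat nz Q A"
  have sw: "(\<Sum>i<n. \<Sum>j<n. y i * M i j * y j) = (\<Sum>i<n. \<Sum>j<n. y i * M j i * y j)"
    by (subst sum.swap) (intro sum.cong refl, simp add: algebra_simps)
  have MM: "\<And>i j. M i j + M j i = (if i < nz then (if j < nz then 2 * Q i j else 0) else 0)"
    unfolding M_def Mmat_def using Qs by auto
  have MM': "\<And>i j. y i * (M i j + M j i) * y j = (if i < nz then (if j < nz then 2 * (y i * Q i j * y j) else 0) else 0)"
    using MM by simp
  have "2 * KK n M y y = (\<Sum>i<n. \<Sum>j<n. y i * M i j * y j) + (\<Sum>i<n. \<Sum>j<n. y i * M j i * y j)"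
    unfolding L_dm using sw by simp
  also have "\<dots> = (\<Sum>i<n. \<Sum>j<n. y i * (M i j + M j i) * y j)"
    by (simp add: sum.distrib[symmetric] algebra_simps)
  also have "\<dots> = (\<Sum>i<n. if i < nz then (\<Sum>j<n. if j < nz then 2 * (y i * Q i j * y j) else 0) else 0)"
    by (intro sum.cong refl) (simp add: MM' sum_distrib_left)
  also have "\<dots> = (\<Sum>i<nz. (\<Sum>j<n. if j < nz then 2 * (y i * Q i j * y j) else 0))"
    unfolding n_def by (rule sum_if_less) simp
  also have "\<dots> = (\<Sum>i<nz. (\<Sum>j<nz. 2 * (y i * Q i j * y j)))"
    unfolding n_def by (intro sum.cong refl sum_if_less) simp
  also have "\<dots> = 2 * (\<Sum>i<nz. \<Sum>j<nz. y i * Q i j * y j)"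
    by (simp add: sum_distrib_left)
  finally have "2 * KK n M y y = 2 * (\<Sum>i<nz. \<Sum>j<nz. y i * Q i j * y j)" .
  moreover have "0 \<le> (\<Sum>i<nz. \<Sum>j<nz. y i * Q i j * y j)" using Qp by blast
  ultimately show ?thesis unfolding n_def M_def by simp
qed

lemma L_w:
  assumes t: "x n > 0"
  shows "dotp (n+1) dx (matvec (n+1) (jac n M q x) dx) = KK n M dx dx + dx n * dotp n dx q + dx n * matvec (n+1) (jac n M q x) dx n"
    and "dotp (n+1) dx (matvec (n+1) (jac n M q x) dx) = KK n M (\<lambda>i. dx i - (dx n / x n) * x i) (\<lambda>i. dx i - (dx n / x n) * x i)"
proof -
  have "dotp (n+1) dx (matvec (n+1) (jac n M q x) dx) = (\<Sum>i<n. dx i * matvec (n+1) (jac n M q x) dx i) + dx n * matvec (n+1) (jac n M q x) dx n"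
    by (simp add: dotp_def)
  also have "(\<Sum>i<n. dx i * matvec (n+1) (jac n M q x) dx i) = (\<Sum>i<n. dx i * (matvec n M dx i + q i * dx n))"
    by (intro sum.cong refl) (simp add: L_Jd_lt')
  also have "\<dots> = KK n M dx dx + dx n * dotp n dx q"
    by (simp add: dotp_def algebra_simps sum.distrib sum_distrib_left)
  finally show A: "dotp (n+1) dx (matvec (n+1) (jac n M q x) dx) = KK n M dx dx + dx n * dotp n dx q + dx n * matvec (n+1) (jac n M q x) dx n" .
  have dq: "dotp n q dx = dotp n dx q" by (simp add: dotp_def mult.commute)
  show "dotp (n+1) dx (matvec (n+1) (jac n M q x) dx) = KK n M (\<lambda>i. dx i - (dx n / x n) * x i) (\<lambda>i. dx i - (dx n / x n) * x i)"
    unfolding A L_Jd_n L_Kbil dq using t by (simp add: field_simps power2_eq_square)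
qed

lemma L_F2:
  assumes t: "x n \<noteq> 0"
  shows "dotp (n+1) x (matvec (n+1) (jac n M q x) dx) = - dotp (n+1) (psi n M q x) dx"
proof -
  have "dotp (n+1) x (matvec (n+1) (jac n M q x) dx) = (\<Sum>i<n. x i * matvec (n+1) (jac n M q x) dx i) + x n * matvec (n+1) (jac n M q x) dx n"
    by (simp add: dotp_def)
  also have "(\<Sum>i<n. x i * matvec (n+1) (jac n M q x) dx i) = (\<Sum>i<n. x i * (matvec n M dx i + q i * dx n))"
    by (intro sum.cong refl) (simp add: L_Jd_lt')
  also have "\<dots> = KK n M x dx + dx n * dotp n x q"
    by (simp add: dotp_def algebra_simps sum.distrib sum_distrib_left)
  finally have A: "dotp (n+1) x (matvec (n+1) (jac n M q x) dx) = KK n M x dx + dx n * dotp n x q + x n * matvec (n+1) (jac n M q x) dx n" .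
  have "dotp (n+1) (psi n M q x) dx = (\<Sum>i<n. psi n M q x i * dx i) + psi n M q x n * dx n"
    by (simp add: dotp_def)
  also have "(\<Sum>i<n. psi n M q x i * dx i) = (\<Sum>i<n. dx i * (matvec n M x i + q i * x n))"
    by (intro sum.cong refl) (simp add: psi_def mult.commute)
  also have "\<dots> = KK n M dx x + x n * dotp n dx q"
    by (simp add: dotp_def algebra_simps sum.distrib sum_distrib_left)
  finally have B: "dotp (n+1) (psi n M q x) dx = KK n M dx x + x n * dotp n dx q + psi n M q x n * dx n" .
  have dq: "dotp n q dx = dotp n dx q" by (simp add: dotp_def mult.commute)
  show ?thesis unfolding A B L_Jd_n dq using t by (simp add: psi_def field_simps power2_eq_square)
qed

lemma L_e_lt:
  assumes i: "i < n"
  shows "psi n M q (\<lambda>i. x i + dx i) i - psi n M q x i - matvec (n+1) (jac n M q x) dx i = 0"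
proof -
  have "matvec n M (\<lambda>i. x i + dx i) i = matvec n M x i + matvec n M dx i"
    by (simp add: matvec_def algebra_simps sum.distrib)
  then show ?thesis using i by (simp add: psi_def L_Jd_lt' algebra_simps)
qed


lemma gen_en: "\<And>a b1 b2 c p p' \<tau> \<delta> :: real. \<tau> > 0 \<Longrightarrow> \<tau> + \<delta> > 0 \<Longrightarrow>
     (\<tau> + \<delta>) * ((- (a + b1 + b2 + c) / (\<tau> + \<delta>) - (p + p')) - (- a / \<tau> - p) - (- (b1 + b2) / \<tau> - p' + a / \<tau>^2 * \<delta>))
     = - (c + \<delta> * p' + \<delta> * (- (b1 + b2) / \<tau> - p' + a / \<tau>^2 * \<delta>))"
proof -
  fix a b1 b2 c p p' \<tau> \<delta> :: real
  assume t: "\<tau> > 0" and tp: "\<tau> + \<delta> > 0"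
  have e: "(\<tau> + \<delta>) * (- (a + b1 + b2 + c) / (\<tau> + \<delta>)) = - (a + b1 + b2 + c)" using tp by simp
  have "(\<tau> + \<delta>) * ((- (a + b1 + b2 + c) / (\<tau> + \<delta>) - (p + p')) - (- a / \<tau> - p) - (- (b1 + b2) / \<tau> - p' + a / \<tau>^2 * \<delta>))
     = (\<tau> + \<delta>) * (- (a + b1 + b2 + c) / (\<tau> + \<delta>)) - (\<tau> + \<delta>) * ((p + p') + (- a / \<tau> - p) + (- (b1 + b2) / \<tau> - p' + a / \<tau>^2 * \<delta>))"
    by (simp add: algebra_simps)
  also have "\<dots> = - (a + b1 + b2 + c) - (\<tau> + \<delta>) * ((p + p') + (- a / \<tau> - p) + (- (b1 + b2) / \<tau> - p' + a / \<tau>^2 * \<delta>))"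
    using e by simp
  also have "\<dots> = - (c + \<delta> * p' + \<delta> * (- (b1 + b2) / \<tau> - p' + a / \<tau>^2 * \<delta>))"
    using t by (simp add: field_simps power2_eq_square)
  finally show "?thesis a b1 b2 c p p' \<tau> \<delta>" .
qed

lemma L_e_n:
  assumes t: "x n > 0" and tp: "x n + dx n > 0"
  shows "(x n + dx n) * (psi n M q (\<lambda>i. x i + dx i) n - psi n M q x n - matvec (n+1) (jac n M q x) dx n)
     = - dotp (n+1) dx (matvec (n+1) (jac n M q x) dx)"
proof -
  have dp: "dotp n (\<lambda>i. x i + dx i) q = dotp n x q + dotp n dx q" by (simp add: dotp_def algebra_simps sum.distrib)
  have dq: "dotp n q dx = dotp n dx q" by (simp add: dotp_def mult.commute)
  show ?thesis
    unfolding L_w(1)[where x=x and n=n and M=M and q=q and dx=dx, OF t] L_Jd_n dq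
    using gen_en[OF t tp, of "KK n M x x" "KK n M x dx" "KK n M dx x" "KK n M dx dx" "dotp n x q" "dotp n dx q"]
    by (simp add: psi_def L_Kadd dp)
qed



theorem mainTheorem8:
  fixes nz nb :: nat
    and Q A :: "nat \<Rightarrow> nat \<Rightarrow> real"
    and c b :: "nat \<Rightarrow> real"
    and x s dx ds :: "nat \<Rightarrow> real"
    and \<beta> :: real
  defines "n \<equiv> nz + nb"
    and "M \<equiv> Mmat nz Q A"
    and "q \<equiv> qvec nz c b"
    and "\<eta> \<equiv> \<beta> / sqrt (real (nz + nb + 1))"
  assumes Q_sym: "\<forall>i<nz. \<forall>j<nz. Q i j = Q j i"
    and Q_psd: "\<forall>z. 0 \<le> (\<Sum>i<nz. \<Sum>j<nz. z i * Q i j * z j)"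
    and n_pos: "1 \<le> n"
    and x_pos: "\<forall>i<n+1. 0 < x i"
    and s_pos: "\<forall>i<n+1. 0 < s i"
    and beta_pos: "0 < \<beta>" and beta_lt: "\<beta> < sqrt 2 - 1"
    and nbhd: "centdev n x s \<le> \<beta> * mubar n x s"
    and newton: "newton_sys n M q \<eta> (1 - \<eta>) x s dx ds"
  shows "let xp = (\<lambda>i. x i + dx i);
             sp = (\<lambda>i. psi n M q xp i + (1 - \<eta>) * (s i - psi n M q x i))
         in (\<forall>i<n+1. 0 < xp i) \<and>
            centdev n xp sp \<le> \<beta> * mubar n xp sp \<and>
            (\<forall>i<n+1. 0 < sp i)"
  proof -
  define J where "J = jac n M q x"
  define Jd where "Jd = matvec (n+1) J dx"
  define \<mu> where "\<mu> = mubar n x s"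
  define w where "w = dotp (n+1) dx Jd"
  define xp where "xp = (\<lambda>i. x i + dx i)"
  define sp where "sp = (\<lambda>i. psi n M q xp i + (1 - \<eta>) * (s i - psi n M q x i))"
  have tau: "x n > 0" using x_pos by simp
  have N2: "2 \<le> n + 1" using n_pos by simp
  have b1: "\<beta> < 1" using beta_lt r32 by simp
  have ne1: "\<forall>i<n+1. ds i - Jd i = - \<eta> * (s i - psi n M q x i)"
    using newton unfolding newton_sys_def Jd_def J_def by blast
  have ne2: "\<forall>i<n+1. x i * ds i + s i * dx i = (1 - \<eta>) * \<mu> - x i * s i"
    using newton unfolding newton_sys_def \<mu>_def by blast
  have Kpsd: "\<And>y. 0 \<le> KK n M y y" unfolding n_def M_def using L_Kpsd Q_sym Q_psd by blast
  have w0: "0 \<le> w" unfolding w_def Jd_def J_def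
    L_w(2)[where x=x and n=n and M=M and q=q and dx=dx, OF tau] using Kpsd by simp
  have mu_eq: "dotp (n+1) x s = real (n+1) * \<mu>" unfolding \<mu>_def mubar_def by simp
  have s1: "(\<Sum>i<n+1. x i * ds i + s i * dx i) = (\<Sum>i<n+1. (1 - \<eta>) * \<mu> - x i * s i)"
    using ne2 by (intro sum.cong refl) simp
  also have "\<dots> = real (n+1) * ((1 - \<eta>) * \<mu>) - real (n+1) * \<mu>"
    using mu_eq by (simp add: sum_subtractf dotp_def)
  finally have s1': "(\<Sum>i<n+1. x i * ds i) + (\<Sum>i<n+1. s i * dx i) = real (n+1) * ((1 - \<eta>) * \<mu>) - real (n+1) * \<mu>"
    by (simp add: sum.distrib)
  have xds: "(\<Sum>i<n+1. x i * ds i) = dotp (n+1) x Jd - \<eta> * (dotp (n+1) x s - dotp (n+1) x (psi n M q x))"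
  proof -
    have "(\<Sum>i<n+1. x i * ds i) = (\<Sum>i<n+1. x i * Jd i - \<eta> * (x i * s i) + \<eta> * (x i * psi n M q x i))"
    proof (intro sum.cong refl)
      fix i assume "i \<in> {..<n+1}"
      then have h: "ds i = Jd i - \<eta> * (s i - psi n M q x i)" using ne1 by (simp add: algebra_simps)
      show "x i * ds i = x i * Jd i - \<eta> * (x i * s i) + \<eta> * (x i * psi n M q x i)" by (simp only: h) (simp add: algebra_simps)
    qed
    also have "\<dots> = dotp (n+1) x Jd - \<eta> * (dotp (n+1) x s - dotp (n+1) x (psi n M q x))"
      by (simp add: dotp_def sum.distrib sum_subtractf sum_distrib_left algebra_simps)
    finally show ?thesis .
  qed
  have F2: "dotp (n+1) x Jd = - dotp (n+1) (psi n M q x) dx"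
    unfolding Jd_def J_def using L_F2[where x=x and n=n] tau by simp
  have orth: "dotp (n+1) x (psi n M q x) = 0" using L_psi_orth[where x=x and n=n] tau by simp
  have R0: "(\<Sum>i<n+1. dx i * (s i - psi n M q x i)) = 0"
  proof -
    have "(\<Sum>i<n+1. dx i * (s i - psi n M q x i)) = (\<Sum>i<n+1. s i * dx i) - dotp (n+1) (psi n M q x) dx"
      by (simp add: dotp_def sum_subtractf algebra_simps)
    also have "\<dots> = 0" using s1' xds F2 orth mu_eq by (simp add: algebra_simps)
    finally show ?thesis .
  qed
  have dxds: "(\<Sum>i<n+1. dx i * ds i) = w"
  proof -
    have "(\<Sum>i<n+1. dx i * ds i) = (\<Sum>i<n+1. dx i * Jd i - \<eta> * (dx i * (s i - psi n M q x i)))"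
    proof (intro sum.cong refl)
      fix i assume "i \<in> {..<n+1}"
      then have h: "ds i = Jd i - \<eta> * (s i - psi n M q x i)" using ne1 by (simp add: algebra_simps)
      show "dx i * ds i = dx i * Jd i - \<eta> * (dx i * (s i - psi n M q x i))" by (simp only: h) (simp add: algebra_simps)
    qed
    also have "\<dots> = w - \<eta> * (\<Sum>i<n+1. dx i * (s i - psi n M q x i))"
      unfolding w_def dotp_def by (simp only: sum_subtractf sum_distrib_left)
    finally show ?thesis using R0 by simp
  qed
  have cent: "(\<Sum>i<n+1. (x i * s i - \<mu>)^2) \<le> (\<beta> * \<mu>)^2"
  proof -
    have nn: "0 \<le> (\<Sum>i<n+1. (x i * s i - \<mu>)^2)" by (intro sum_nonneg) simp
    have "sqrt (\<Sum>i<n+1. (x i * s i - \<mu>)^2) \<le> \<beta> * \<mu>" using nbhd unfolding centdev_def \<mu>_def .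
    then have "(sqrt (\<Sum>i<n+1. (x i * s i - \<mu>)^2))^2 \<le> (\<beta> * \<mu>)^2" using nn by (intro power_mono) auto
    then show ?thesis using nn by simp
  qed
  have muform: "\<mu> = (\<Sum>i<n+1. x i * s i) / real (n+1)" unfolding \<mu>_def mubar_def dotp_def by simp
  have etaform: "\<eta> = \<beta> / sqrt (real (n+1))" unfolding \<eta>_def n_def by simp
  have AS: "(\<forall>i<n+1. 0 < x i + dx i) \<and>
         (\<Sum>i<n+1. (dx i * ds i - (if i = n then w else 0))^2) \<le> (\<beta> * (1 - \<eta>) * \<mu>)^2"
    by (rule abstract_step[where N="n+1" and k=n and x=x and s=s and u=dx and v=ds and \<beta>=\<beta> and \<eta>=\<eta> and \<mu>=\<mu> and w=w])
       (use N2 x_pos s_pos muform cent beta_pos beta_lt etaform ne2 dxds w0 in auto)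
  have xpp: "\<forall>i<n+1. 0 < xp i" using AS xp_def by simp
  have bnd: "(\<Sum>i<n+1. (dx i * ds i - (if i = n then w else 0))^2) \<le> (\<beta> * (1 - \<eta>) * \<mu>)^2" using AS by blast
  have taup: "x n + dx n > 0" using xpp xp_def by simp
  have prod: "\<forall>i<n+1. xp i * sp i = (1 - \<eta>) * \<mu> + (dx i * ds i - (if i = n then w else 0))"
  proof (intro allI impI)
    fix i assume i: "i < n+1"
    have dsi: "ds i = Jd i - \<eta> * (s i - psi n M q x i)" using ne1 i by (simp add: algebra_simps)
    have spi: "sp i = s i + ds i + (psi n M q xp i - psi n M q x i - Jd i)" unfolding sp_def by (simp only: dsi) (simp add: algebra_simps)
    have xe: "xp i * (psi n M q xp i - psi n M q x i - Jd i) = - (if i = n then w else 0)"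
    proof (cases "i = n")
      case True
      then show ?thesis unfolding xp_def Jd_def J_def w_def using L_e_n[where x=x and n=n and dx=dx and M=M and q=q] tau taup by simp
    next
      case False
      then have "i < n" using i by simp
      then show ?thesis unfolding xp_def Jd_def J_def using L_e_lt[where x=x and n=n and dx=dx and M=M and q=q and i=i] False by simp
    qed
    have "xp i * sp i = (x i + dx i) * (s i + ds i) + xp i * (psi n M q xp i - psi n M q x i - Jd i)"
      unfolding spi by (simp add: xp_def algebra_simps)
    also have "(x i + dx i) * (s i + ds i) = (x i * ds i + s i * dx i) + x i * s i + dx i * ds i" by (simp add: algebra_simps)
    also have "x i * ds i + s i * dx i = (1 - \<eta>) * \<mu> - x i * s i" using ne2 i by simp
    finally show "xp i * sp i = (1 - \<eta>) * \<mu> + (dx i * ds i - (if i = n then w else 0))" using xe by simp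
  qed
  have muplus: "mubar n xp sp = (1 - \<eta>) * \<mu>"
  proof -
    have "dotp (n+1) xp sp = (\<Sum>i<n+1. (1 - \<eta>) * \<mu> + (dx i * ds i - (if i = n then w else 0)))"
      unfolding dotp_def using prod by (intro sum.cong refl) simp
    also have "\<dots> = real (n+1) * ((1 - \<eta>) * \<mu>) + ((\<Sum>i<n+1. dx i * ds i) - w)"
      by (simp add: sum.distrib sum_subtractf)
    also have "\<dots> = real (n+1) * ((1 - \<eta>) * \<mu>)" using dxds by simp
    finally show ?thesis unfolding mubar_def by simp
  qed
  have mupos: "\<mu> > 0"
  proof -
    have "dotp (n+1) x s > 0" unfolding dotp_def using x_pos s_pos
      by (intro sum_pos) (auto simp: lessThan_empty_iff)
    then show ?thesis using mu_eq by (simp add: zero_less_mult_iff)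
  qed
  have eta_le: "\<eta> \<le> \<beta>"
  proof -
    have "1 \<le> sqrt (real (n+1))" by simp
    then have "\<beta> / sqrt (real (n+1)) \<le> \<beta> / 1" using beta_pos by (intro divide_left_mono) auto
    then show ?thesis using etaform by simp
  qed
  have gam: "0 < 1 - \<eta>" using eta_le b1 by simp
  have bg: "0 \<le> \<beta> * (1 - \<eta>) * \<mu>" using beta_pos gam mupos by simp
  have centp: "centdev n xp sp \<le> \<beta> * mubar n xp sp"
  proof -
    have "centdev n xp sp = sqrt (\<Sum>i<n+1. (dx i * ds i - (if i = n then w else 0))^2)"
      unfolding centdev_def muplus using prod by (intro arg_cong[where f=sqrt] sum.cong refl) simp
    also have "\<dots> \<le> sqrt ((\<beta> * (1 - \<eta>) * \<mu>)^2)" using bnd by (rule real_sqrt_le_mono)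
    also have "\<dots> = \<beta> * mubar n xp sp" using bg muplus by simp
    finally show ?thesis .
  qed
  have spp: "\<forall>i<n+1. 0 < sp i"
  proof (intro allI impI)
    fix i assume i: "i < n+1"
    define bi where "bi = dx i * ds i - (if i = n then w else 0)"
    have "bi^2 \<le> (\<Sum>i<n+1. (dx i * ds i - (if i = n then w else 0))^2)"
      unfolding bi_def using i by (intro member_le_sum) auto
    then have "bi^2 \<le> (\<beta> * (1 - \<eta>) * \<mu>)^2" using bnd by linarith
    then have "\<bar>bi\<bar> \<le> \<bar>\<beta> * (1 - \<eta>) * \<mu>\<bar>" using abs_le_square_iff by blast
    then have "- bi \<le> \<beta> * (1 - \<eta>) * \<mu>" using bg by simp
    moreover have "0 < (1 - \<beta>) * ((1 - \<eta>) * \<mu>)" using b1 gam mupos by simp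
    ultimately have "0 < (1 - \<eta>) * \<mu> + bi" by (simp add: algebra_simps)
    then have "0 < xp i * sp i" using prod i bi_def by simp
    moreover have "0 < xp i" using xpp i by blast
    ultimately show "0 < sp i" by (simp add: zero_less_mult_iff)
  qed
  show ?thesis unfolding Let_def using xpp centp spp unfolding xp_def sp_def by blast
qed

end
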